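(* Every efficiently structured polyomino is crystallized.
   Context: A polyomino is a finite union of closed unit squares (tiles) of the square lattice, any two meeting (if at all) in a whole edge, whose interior is connected. Its holes are the bounded connected components of its complement in the plane; $h(A)$ is the number of holes and $|A|$ the number of tiles. The area of a hole is the number of unit squares needed to fill it. For $h\ge1$, $g(h)=\min\{|A|: h(A)=h\}$, and a polyomino with $h$ holes is crystallized if it has $g(h)$ tiles. The dual graph of $A$ has a vertex for each tile and an edge between two tiles sharing an edge; $A$ is acyclic if its dual graph is a tree. The perimeter of $A$ consists of the unit edges on its topological boundary; those bounding a hole form the hole perimeter, the others the outer perimeter, whose number of edges is $p_o(A)$. A polyomino with $n$ tiles and $h$ holes has minimal outer perimeter if $p_o(A)=2\lceil 2\sqrt{n+h}\,\rceil$. A polyomino is efficiently structured if it is acyclic, each of its holes has area one, and it has minimal outer perimeter. *)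

theory Defs
  imports Complex_Main
begin

text \<open>Discrete model: the tile with lower-left corner (i,j) is the closed unit square
[i,i+1] x [j,j+1]; a set of tiles is a finite set of cells in int x int.\<close>

type_synonym cell = "int \<times> int"

definition adj :: "cell \<Rightarrow> cell \<Rightarrow> bool" where
  "adj c d \<longleftrightarrow> \<bar>fst c - fst d\<bar> + \<bar>snd c - snd d\<bar> = 1"

definition adj_rel :: "cell set \<Rightarrow> (cell \<times> cell) set" where
  "adj_rel S = {(c, d). c \<in> S \<and> d \<in> S \<and> adj c d}"

text \<open>Polyomino: finite nonempty set of tiles with connected interior
(equivalently, tiles connected through shared edges).\<close>
definition polyomino :: "cell set \<Rightarrow> bool" where
  "polyomino A \<longleftrightarrow> finite A \<and> A \<noteq> {} \<and> (\<forall>c\<in>A. \<forall>d\<in>A. (c, d) \<in> (adj_rel A)\<^sup>*)"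

text \<open>Connected components of a set of cells under edge adjacency.
For the complement of a polyomino these are exactly the connected components
of the (open) complement of the union of tiles.\<close>
definition components :: "cell set \<Rightarrow> cell set set" where
  "components S = {(adj_rel S)\<^sup>* `` {c} | c. c \<in> S}"

text \<open>Holes: bounded (= finite) connected components of the complement.\<close>
definition holes :: "cell set \<Rightarrow> cell set set" where
  "holes A = {K \<in> components (- A). finite K}"

definition num_holes :: "cell set \<Rightarrow> nat" where
  "num_holes A = card (holes A)"

definition g :: "nat \<Rightarrow> nat" where
  "g h = (LEAST n. \<exists>A. polyomino A \<and> num_holes A = h \<and> card A = n)"

definition crystallized :: "cell set \<Rightarrow> bool" where
  "crystallized A \<longleftrightarrow> polyomino A \<and> num_holes A \<ge> 1 \<and> card A = g (num_holes A)"

text \<open>Dual graph acyclic: no cycle v_0,...,v_k (k >= 2, distinct vertices) in the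
adjacency graph of the tiles. Together with connectedness this means the dual graph is a tree.\<close>
definition acyclic_poly :: "cell set \<Rightarrow> bool" where
  "acyclic_poly A \<longleftrightarrow> polyomino A \<and>
     \<not> (\<exists>vs. length vs \<ge> 3 \<and> distinct vs \<and> set vs \<subseteq> A \<and>
            (\<forall>i. Suc i < length vs \<longrightarrow> adj (vs ! i) (vs ! Suc i)) \<and>
            adj (last vs) (hd vs))"

text \<open>A unit edge of the perimeter is represented by the pair (c,d) with c a tile and
d a non-tile cell sharing that edge. Outer perimeter: those whose outside cell d
does not lie in a hole.\<close>
definition outer_perimeter :: "cell set \<Rightarrow> nat" where
  "outer_perimeter A = card {(c, d). c \<in> A \<and> d \<notin> A \<and> adj c d \<and> d \<notin> \<Union>(holes A)}"

definition min_outer_perimeter :: "cell set \<Rightarrow> bool" where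
  "min_outer_perimeter A \<longleftrightarrow>
     int (outer_perimeter A) = 2 * \<lceil>2 * sqrt (real (card A + num_holes A))\<rceil>"

definition efficiently_structured :: "cell set \<Rightarrow> bool" where
  "efficiently_structured A \<longleftrightarrow> polyomino A \<and> acyclic_poly A \<and>
     (\<forall>K\<in>holes A. card K = 1) \<and> min_outer_perimeter A"

end

theory Submission
  imports Defs
begin


definition nbrs :: "cell \<Rightarrow> cell set" where
  "nbrs c = {(fst c + 1, snd c), (fst c - 1, snd c), (fst c, snd c + 1), (fst c, snd c - 1)}"

lemma adj_iff_nbrs: "adj c d \<longleftrightarrow> d \<in> nbrs c"
  unfolding adj_def nbrs_def by (cases c; cases d) (auto simp: abs_if prod_eq_iff split: if_splits)

lemma card_nbrs: "card (nbrs c) = 4"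
  unfolding nbrs_def by (cases c) auto

lemma adj_sym: "adj c d \<Longrightarrow> adj d c"
  unfolding adj_def by (simp add: abs_minus_commute)

lemma adj_irrefl: "\<not> adj c c"
  unfolding adj_def by simp

lemma finite_nbrs: "finite (nbrs c)" unfolding nbrs_def by simp

definition bnd :: "cell set \<Rightarrow> (cell \<times> cell) set" where
  "bnd S = {(c, d). c \<in> S \<and> d \<notin> S \<and> adj c d}"

lemma card_all_pairs:
  assumes "finite S"
  shows "card {(c, d). c \<in> S \<and> adj c d} = 4 * card S"
proof -
  have "{(c, d). c \<in> S \<and> adj c d} = Sigma S nbrs"
    by (auto simp: adj_iff_nbrs)
  then show ?thesis using assms by (simp add: card_nbrs finite_nbrs)
qed

lemma finite_all_pairs: "finite S \<Longrightarrow> finite {(c, d). c \<in> S \<and> adj c d}"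
proof -
  assume "finite S"
  have "{(c, d). c \<in> S \<and> adj c d} = Sigma S nbrs"
    by (auto simp: adj_iff_nbrs)
  then show ?thesis using \<open>finite S\<close> by (simp add: finite_nbrs)
qed

lemma count4:
  assumes "finite S"
  shows "4 * card S = card (adj_rel S) + card (bnd S)"
proof -
  have eq: "{(c, d). c \<in> S \<and> adj c d} = adj_rel S \<union> bnd S"
    unfolding adj_rel_def bnd_def by auto
  have "finite (adj_rel S)" "finite (bnd S)"
    using finite_all_pairs[OF assms] eq by (metis finite_Un)+
  moreover have "adj_rel S \<inter> bnd S = {}" unfolding adj_rel_def bnd_def by auto
  ultimately show ?thesis using card_all_pairs[OF assms] eq
    by (simp add: card_Un_disjoint)
qed

lemma finite_adj_rel: "finite S \<Longrightarrow> finite (adj_rel S)"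
  by (rule finite_subset[OF _ finite_all_pairs]) (auto simp: adj_rel_def)

lemma finite_bnd: "finite S \<Longrightarrow> finite (bnd S)"
  by (rule finite_subset[OF _ finite_all_pairs]) (auto simp: bnd_def)

lemma sym_adj_rel: "sym (adj_rel S)"
  unfolding sym_def adj_rel_def using adj_sym by auto



definition is_path :: "cell set \<Rightarrow> cell list \<Rightarrow> bool" where
  "is_path Y vs \<longleftrightarrow> vs \<noteq> [] \<and> distinct vs \<and> set vs \<subseteq> Y \<and>
     (\<forall>i. Suc i < length vs \<longrightarrow> adj (vs ! i) (vs ! Suc i))"

lemma cycle_from_mindeg:
  assumes fin: "finite Y" and ne: "Y \<noteq> {}"
    and deg: "\<forall>y\<in>Y. 2 \<le> card {z\<in>Y. adj y z}"
  shows "\<exists>vs. length vs \<ge> 3 \<and> distinct vs \<and> set vs \<subseteq> Y \<and>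
            (\<forall>i. Suc i < length vs \<longrightarrow> adj (vs ! i) (vs ! Suc i)) \<and>
            adj (last vs) (hd vs)"
proof -
  obtain y0 where y0: "y0 \<in> Y" using ne by blast
  have p0: "is_path Y [y0]" using y0 unfolding is_path_def by auto
  have bnd: "\<forall>l. (\<exists>vs. is_path Y vs \<and> length vs = l) \<longrightarrow> l \<le> card Y"
  proof (intro allI impI)
    fix l assume "\<exists>vs. is_path Y vs \<and> length vs = l"
    then obtain vs where vs: "is_path Y vs" "length vs = l" by blast
    have "length vs = card (set vs)" using vs(1) distinct_card unfolding is_path_def by metis
    also have "\<dots> \<le> card Y" using vs(1) fin card_mono unfolding is_path_def by metis
    finally show "l \<le> card Y" using vs(2) by simp
  qed
  have p1: "\<exists>vs. is_path Y vs \<and> length vs = 1" using p0 by (intro exI[of _ "[y0]"]) simp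
  have "\<exists>l. (\<exists>vs. is_path Y vs \<and> length vs = l) \<and> (\<forall>l'. (\<exists>vs. is_path Y vs \<and> length vs = l') \<longrightarrow> l' \<le> l)"
    by (rule Nat.ex_has_greatest_nat[OF p1 bnd])
  then obtain l where l: "\<exists>vs. is_path Y vs \<and> length vs = l"
    and lmax: "\<forall>l'. (\<exists>vs. is_path Y vs \<and> length vs = l') \<longrightarrow> l' \<le> l"
    by blast
  obtain vs where vs: "is_path Y vs" "length vs = l" using l by blast
  define v where "v = hd vs"
  have vsne: "vs \<noteq> []" and vsY: "set vs \<subseteq> Y" using vs(1) unfolding is_path_def by auto
  have vY: "v \<in> Y" using vsne vsY hd_in_set unfolding v_def by blast
  define N where "N = {z\<in>Y. adj v z}"
  have cN: "2 \<le> card N" using deg vY N_def by auto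
  have Nsub: "N \<subseteq> set vs"
  proof
    fix z assume z: "z \<in> N"
    show "z \<in> set vs"
    proof (rule ccontr)
      assume nz: "z \<notin> set vs"
      have "is_path Y (z # vs)"
        using vs(1) z nz unfolding is_path_def N_def v_def
        apply (auto simp: nth_Cons' hd_conv_nth split: if_splits intro: adj_sym)
        by (metis Suc_pred)
      then have "length (z # vs) \<le> l" using lmax by blast
      then have "Suc l \<le> l" using vs(2) by simp
      then show False by simp
    qed
  qed
  have vN: "v \<notin> N" unfolding N_def using adj_irrefl by auto
  have l2: "2 \<le> length vs"
  proof (rule ccontr)
    assume "\<not> 2 \<le> length vs"
    then have "length vs = 1" using vs unfolding is_path_def by (cases vs) auto
    then have "set vs = {v}" unfolding v_def by (cases vs) auto
    then have "N = {}" using Nsub vN by auto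
    then show False using cN by simp
  qed
  obtain z where z: "z \<in> N" "z \<noteq> vs ! 1"
  proof -
    have "\<not> N \<subseteq> {vs ! 1}"
    proof
      assume "N \<subseteq> {vs ! 1}"
      then have "card N \<le> 1" using card_mono[of "{vs ! 1}" N] by simp
      then show False using cN by simp
    qed
    then show ?thesis using that by auto
  qed
  obtain i where i: "i < length vs" "vs ! i = z" using z Nsub by (meson in_set_conv_nth subsetD)
  have "i \<noteq> 0" using i z vN unfolding v_def using vs(1) unfolding is_path_def
    by (metis hd_conv_nth)
  moreover have "i \<noteq> 1" using i z by auto
  ultimately have i2: "2 \<le> i" by simp
  define cs where "cs = take (Suc i) vs"
  have "length cs \<ge> 3" unfolding cs_def using i i2 by simp
  moreover have "distinct cs" "set cs \<subseteq> Y" unfolding cs_def using vs(1) unfolding is_path_def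
    by (auto dest: in_set_takeD)
  moreover have "\<forall>j. Suc j < length cs \<longrightarrow> adj (cs ! j) (cs ! Suc j)"
    unfolding cs_def using vs(1) unfolding is_path_def by auto
  moreover have "last cs = z" unfolding cs_def using i by (subst last_conv_nth) (auto simp: min_def intro: arg_cong[where f="(!) vs"])
  moreover have "hd cs = v" unfolding cs_def v_def using vs(1) unfolding is_path_def
    by (cases vs) auto
  moreover have "adj z v" using z unfolding N_def using adj_sym by auto
  ultimately show ?thesis by (intro exI[of _ cs]) simp
qed

lemma core_exists:
  assumes "finite S" "S \<noteq> {}" "2 * card S \<le> card (adj_rel S) + 1"
  shows "\<exists>Y\<subseteq>S. Y \<noteq> {} \<and> (\<forall>y\<in>Y. 2 \<le> card {z\<in>Y. adj y z})"
  using assms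
proof (induction "card S" arbitrary: S rule: less_induct)
  case less
  show ?case
  proof (cases "\<forall>y\<in>S. 2 \<le> card {z\<in>S. adj y z}")
    case True
    then show ?thesis using less.prems by blast
  next
    case False
    then obtain v where v: "v \<in> S" "card {z\<in>S. adj v z} \<le> 1" by force
    define S' where "S' = S - {v}"
    define N where "N = {z\<in>S. adj v z}"
    have fS': "finite S'" using less.prems S'_def by simp
    have sub: "adj_rel S \<subseteq> adj_rel S' \<union> (Pair v ` N) \<union> ((\<lambda>z. (z, v)) ` N)"
      unfolding adj_rel_def S'_def N_def using adj_sym by auto
    have fN: "finite N" using less.prems N_def by simp
    have "card (adj_rel S) \<le> card (adj_rel S' \<union> (Pair v ` N) \<union> ((\<lambda>z. (z, v)) ` N))"
      by (rule card_mono[OF _ sub]) (use fS' fN finite_adj_rel in auto)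
    also have "\<dots> \<le> card (adj_rel S') + card (Pair v ` N) + card ((\<lambda>z. (z, v)) ` N)"
      by (metis (no_types, lifting) add_le_mono card_Un_le le_refl order_trans)
    also have "\<dots> \<le> card (adj_rel S') + card N + card N"
      using card_image_le[OF fN] by (metis add_le_mono le_refl)
    finally have c1: "card (adj_rel S) \<le> card (adj_rel S') + 2" using v N_def by simp
    have cS: "card S = Suc (card S')" using v less.prems S'_def
      by (metis card_Suc_Diff1)
    have ne': "S' \<noteq> {}"
    proof
      assume "S' = {}"
      then have "S = {v}" using v S'_def by auto
      then have "adj_rel S = {}" unfolding adj_rel_def using adj_irrefl by auto
      then show False using less.prems \<open>S = {v}\<close> by simp
    qed
    have "2 * card S' \<le> card (adj_rel S') + 1" using c1 cS less.prems by simp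
    then obtain Y where "Y \<subseteq> S'" "Y \<noteq> {}" "\<forall>y\<in>Y. 2 \<le> card {z\<in>Y. adj y z}"
      using less.hyps[of S'] cS fS' ne' by auto
    then show ?thesis using S'_def by blast
  qed
qed

lemma acyclic_edges:
  assumes "acyclic_poly A"
  shows "card (adj_rel A) + 2 \<le> 2 * card A"
proof (rule ccontr)
  assume "\<not> ?thesis"
  then have h: "2 * card A \<le> card (adj_rel A) + 1" by simp
  have p: "finite A" "A \<noteq> {}" using assms unfolding acyclic_poly_def polyomino_def by auto
  obtain Y where Y: "Y \<subseteq> A" "Y \<noteq> {}" "\<forall>y\<in>Y. 2 \<le> card {z\<in>Y. adj y z}"
    using core_exists[OF p h] by blast
  have "finite Y" using Y p finite_subset by blast
  then obtain vs where "length vs \<ge> 3 \<and> distinct vs \<and> set vs \<subseteq> Y \<and>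
            (\<forall>i. Suc i < length vs \<longrightarrow> adj (vs ! i) (vs ! Suc i)) \<and>
            adj (last vs) (hd vs)"
    using cycle_from_mindeg[OF \<open>finite Y\<close> Y(2) Y(3)] by blast
  moreover have "\<not> (\<exists>vs. length vs \<ge> 3 \<and> distinct vs \<and> set vs \<subseteq> A \<and>
            (\<forall>i. Suc i < length vs \<longrightarrow> adj (vs ! i) (vs ! Suc i)) \<and>
            adj (last vs) (hd vs))" using assms unfolding acyclic_poly_def by simp
  ultimately show False using Y(1) by blast
qed



lemma comp_sub: "K \<in> components C \<Longrightarrow> K \<subseteq> C"
proof
  fix x assume K: "K \<in> components C" and x: "x \<in> K"
  obtain c where c: "c \<in> C" "K = (adj_rel C)\<^sup>* `` {c}" using K unfolding components_def by blast
  then have "(c, x) \<in> (adj_rel C)\<^sup>*" using x by blast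
  then show "x \<in> C" using c(1) by (induction rule: rtrancl_induct) (auto simp: adj_rel_def)
qed

lemma comp_closed:
  assumes "K \<in> components C" "d \<in> K" "d' \<in> C" "adj d d'"
  shows "d' \<in> K"
proof -
  obtain c where c: "c \<in> C" "K = (adj_rel C)\<^sup>* `` {c}" using assms(1) unfolding components_def by blast
  have "d \<in> C" using comp_sub assms(1,2) by blast
  then have "(d, d') \<in> adj_rel C" using assms(3,4) unfolding adj_rel_def by simp
  moreover have "(c, d) \<in> (adj_rel C)\<^sup>*" using c assms(2) by blast
  ultimately have "(c, d') \<in> (adj_rel C)\<^sup>*" by simp
  then show ?thesis using c by blast
qed

lemma comp_disj:
  assumes "K1 \<in> components C" "K2 \<in> components C" "d \<in> K1" "d \<in> K2"
  shows "K1 = K2"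
proof -
  obtain c1 where c1: "K1 = (adj_rel C)\<^sup>* `` {c1}" using assms(1) unfolding components_def by blast
  obtain c2 where c2: "K2 = (adj_rel C)\<^sup>* `` {c2}" using assms(2) unfolding components_def by blast
  have s: "sym ((adj_rel C)\<^sup>*)" using sym_adj_rel sym_rtrancl by blast
  have "(c1, d) \<in> (adj_rel C)\<^sup>*" "(c2, d) \<in> (adj_rel C)\<^sup>*" using assms c1 c2 by auto
  then have "(c1, c2) \<in> (adj_rel C)\<^sup>*" "(c2, c1) \<in> (adj_rel C)\<^sup>*" using s
    by (meson rtrancl_trans symD)+
  then show ?thesis unfolding c1 c2 by (auto intro: rtrancl_trans)
qed

lemma comp_ne: "K \<in> components C \<Longrightarrow> K \<noteq> {}"
  unfolding components_def by auto

lemma ray: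
  assumes K: "K \<in> components C" and d: "d \<in> K" and dir: "\<bar>dx\<bar> + \<bar>dy\<bar> = 1"
    and out: "\<forall>j::nat. (fst d + int j * dx, snd d + int j * dy) \<in> C"
  shows "infinite K"
proof
  assume fin: "finite K"
  define pt where "pt = (\<lambda>j::nat. (fst d + int j * dx, snd d + int j * dy))"
  have inK: "pt j \<in> K" for j
  proof (induction j)
    case 0
    then show ?case using d by (simp add: pt_def)
  next
    case (Suc j)
    have "adj (pt j) (pt (Suc j))" unfolding pt_def adj_def using dir by (simp add: algebra_simps)
    then show ?case using comp_closed[OF K Suc] out pt_def by blast
  qed
  have "inj pt"
  proof (rule injI)
    fix i j assume "pt i = pt j"
    then have "int i * dx = int j * dx" "int i * dy = int j * dy" unfolding pt_def by auto
    then show "i = j" using dir by (cases "dx = 0") auto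
  qed
  then have "infinite (range pt)" using finite_imageD infinite_UNIV_nat by blast
  moreover have "range pt \<subseteq> K" using inK by auto
  ultimately show False using fin finite_subset by blast
qed

lemma tree_count:
  assumes fin: "finite S" and r: "r \<in> S" and conn: "\<forall>v\<in>S. (r, v) \<in> (adj_rel S)\<^sup>*"
  shows "2 * card S \<le> card (adj_rel S) + 2"
    and "Y \<subseteq> S \<Longrightarrow> Y \<noteq> {} \<Longrightarrow> (\<forall>y\<in>Y. \<exists>u1 u2. u1 \<in> Y \<and> u2 \<in> Y \<and> u1 \<noteq> u2 \<and> adj y u1 \<and> adj y u2)
           \<Longrightarrow> 2 * card S \<le> card (adj_rel S)"
proof -
  define R where "R = adj_rel S"
  define dist where "dist v = (LEAST k. (r, v) \<in> R ^^ k)" for v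
  have dist_in: "(r, v) \<in> R ^^ dist v" if "v \<in> S" for v
  proof -
    have "\<exists>k. (r, v) \<in> R ^^ k" using conn that rtrancl_power R_def by blast
    then show ?thesis unfolding dist_def by (rule LeastI_ex)
  qed
  have parex: "\<exists>u. (u, v) \<in> R \<and> dist u + 1 = dist v" if v: "v \<in> S - {r}" for v
  proof -
    have "dist v \<noteq> 0" using dist_in[of v] v by (metis DiffE insertI1 pair_in_Id_conv relpow.simps(1))
    then obtain m where m: "dist v = Suc m" by (cases "dist v") auto
    then have "(r, v) \<in> R ^^ m O R" using dist_in[of v] v by simp
    then obtain u where u: "(r, u) \<in> R ^^ m" "(u, v) \<in> R" by blast
    have "dist u \<le> m" unfolding dist_def using u(1) by (rule Least_le)
    moreover have "\<not> dist u < m"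
    proof
      assume less: "dist u < m"
      have uS: "u \<in> S" using u(2) unfolding R_def adj_rel_def by simp
      have "(r, v) \<in> R ^^ Suc (dist u)" using dist_in[OF uS] u(2) by auto
      moreover have "Suc (dist u) < dist v" using less m by simp
      ultimately show False unfolding dist_def using not_less_Least by blast
    qed
    ultimately have "dist u = m" by simp
    then show ?thesis using u(2) m by (intro exI[of _ u]) simp
  qed
  then obtain par where par: "\<And>v. v \<in> S - {r} \<Longrightarrow> (par v, v) \<in> R \<and> dist (par v) + 1 = dist v"
    by metis
  have symR: "(a, b) \<in> R \<Longrightarrow> (b, a) \<in> R" for a b unfolding R_def adj_rel_def using adj_sym by auto
  define P1 where "P1 = (\<lambda>v. (v, par v)) ` (S - {r})"
  define P2 where "P2 = (\<lambda>v. (par v, v)) ` (S - {r})"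
  have cP1: "card P1 = card S - 1" unfolding P1_def
    by (subst card_image) (auto simp: inj_on_def r fin)
  have cP2: "card P2 = card S - 1" unfolding P2_def
    by (subst card_image) (auto simp: inj_on_def r fin)
  have disj: "P1 \<inter> P2 = {}"
  proof (rule ccontr)
    assume "P1 \<inter> P2 \<noteq> {}"
    then obtain v w where vw: "v \<in> S - {r}" "w \<in> S - {r}" "(v, par v) = (par w, w)"
      unfolding P1_def P2_def by blast
    then show False using par[OF vw(1)] par[OF vw(2)] by auto
  qed
  have sub: "P1 \<union> P2 \<subseteq> R" unfolding P1_def P2_def using par symR by blast
  have finR: "finite R" unfolding R_def using fin finite_adj_rel by blast
  have c12: "card (P1 \<union> P2) = 2 * card S - 2"
    using cP1 cP2 disj card_Un_disjoint finR sub finite_subset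
    by (metis (no_types, lifting) diff_mult_distrib2 finite_Un mult_2 nat_mult_1_right)
  have "card (P1 \<union> P2) \<le> card R" using card_mono[OF finR sub] .
  then show "2 * card S \<le> card (adj_rel S) + 2" using c12 R_def by simp
  assume Y: "Y \<subseteq> S" "Y \<noteq> {}" "\<forall>y\<in>Y. \<exists>u1 u2. u1 \<in> Y \<and> u2 \<in> Y \<and> u1 \<noteq> u2 \<and> adj y u1 \<and> adj y u2"
  have finY: "finite Y" using Y(1) fin finite_subset by blast
  define M where "M = Max (dist ` Y)"
  have "M \<in> dist ` Y" unfolding M_def using finY Y(2) by (intro Max_in) auto
  then obtain y where y: "y \<in> Y" "dist y = M" by auto
  have ymax: "\<And>y'. y' \<in> Y \<Longrightarrow> dist y' \<le> dist y" using y finY M_def by simp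
  obtain u1 u2 where u: "u1 \<in> Y" "u2 \<in> Y" "u1 \<noteq> u2" "adj y u1" "adj y u2" using Y(3) y(1) by blast
  obtain u where u': "u \<in> Y" "adj y u" "\<not> (y \<noteq> r \<and> u = par y)"
  proof (cases "y \<noteq> r \<and> u1 = par y")
    case True
    then show ?thesis using that[of u2] u by auto
  next
    case False
    then show ?thesis using that[of u1] u by auto
  qed
  have yS: "y \<in> S" "u \<in> S" using y(1) u'(1) Y(1) by auto
  have inR: "(y, u) \<in> R" "(u, y) \<in> R" using yS u'(2) adj_sym[OF u'(2)] unfolding R_def adj_rel_def by auto
  have n1: "(y, u) \<notin> P1 \<union> P2"
  proof
    assume "(y, u) \<in> P1 \<union> P2"
    then show False
    proof
      assume "(y, u) \<in> P1"
      then obtain v where "v \<in> S - {r}" "(y, u) = (v, par v)" unfolding P1_def by blast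
      then show False using u'(3) by simp
    next
      assume "(y, u) \<in> P2"
      then obtain v where "v \<in> S - {r}" "(y, u) = (par v, v)" unfolding P2_def by blast
      then show False using par[of u] ymax[OF u'(1)] by simp
    qed
  qed
  have n2: "(u, y) \<notin> P1 \<union> P2"
  proof
    assume "(u, y) \<in> P1 \<union> P2"
    then show False
    proof
      assume "(u, y) \<in> P1"
      then obtain v where "v \<in> S - {r}" "(u, y) = (v, par v)" unfolding P1_def by blast
      then show False using par[of u] ymax[OF u'(1)] by simp
    next
      assume "(u, y) \<in> P2"
      then obtain v where "v \<in> S - {r}" "(u, y) = (par v, v)" unfolding P2_def by blast
      then show False using u'(3) by simp
    qed
  qed
  have neq: "(y, u) \<noteq> (u, y)" using u'(2) adj_irrefl[of y] by auto
  have finP: "finite (P1 \<union> P2)" using finR sub finite_subset by blast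
  have e1: "card (insert (y, u) (insert (u, y) (P1 \<union> P2))) = card (P1 \<union> P2) + 2"
    using n1 n2 neq finP by simp
  have e2: "insert (y, u) (insert (u, y) (P1 \<union> P2)) \<subseteq> R" using sub inR by blast
  have "card (insert (y, u) (insert (u, y) (P1 \<union> P2))) \<le> card R" by (rule card_mono[OF finR e2])
  then have "card (P1 \<union> P2) + 2 \<le> card R" using e1 by simp
  moreover have "0 < card S" using fin r card_gt_0_iff by blast
  ultimately show "2 * card S \<le> card (adj_rel S)" using c12 unfolding R_def by linarith
qed



definition OP :: "cell set \<Rightarrow> (cell \<times> cell) set" where
  "OP B = {(c, d). c \<in> B \<and> d \<notin> B \<and> adj c d \<and> d \<notin> \<Union>(holes B)}"
definition HP :: "cell set \<Rightarrow> (cell \<times> cell) set" where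
  "HP B = {(c, d). c \<in> B \<and> d \<notin> B \<and> adj c d \<and> d \<in> \<Union>(holes B)}"
definition HPK :: "cell set \<Rightarrow> cell set \<Rightarrow> (cell \<times> cell) set" where
  "HPK B K = {(c, d). c \<in> B \<and> adj c d \<and> d \<in> K}"

lemma outer_OP: "outer_perimeter B = card (OP B)"
  unfolding outer_perimeter_def OP_def by simp

lemma count_split:
  assumes "finite B"
  shows "4 * card B = card (adj_rel B) + card (OP B) + card (HP B)"
proof -
  have "bnd B = OP B \<union> HP B" unfolding bnd_def OP_def HP_def by auto
  moreover have "OP B \<inter> HP B = {}" unfolding OP_def HP_def by auto
  moreover have "finite (OP B)" "finite (HP B)"
    using finite_bnd[OF assms] unfolding bnd_def OP_def HP_def
    by (auto intro: finite_subset[of _ "{(c, d). c \<in> B \<and> d \<notin> B \<and> adj c d}"])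
  ultimately have "card (bnd B) = card (OP B) + card (HP B)" by (simp add: card_Un_disjoint)
  then show ?thesis using count4[OF assms] by simp
qed

lemma holes_sub: "K \<in> holes B \<Longrightarrow> K \<subseteq> - B"
  unfolding holes_def using comp_sub by blast

lemma HP_UN:
  shows "HP B = (\<Union>K\<in>holes B. HPK B K)"
  unfolding HP_def HPK_def using holes_sub by fastforce

lemma card_HP:
  assumes fB: "finite B" and fH: "finite (holes B)"
  shows "card (HP B) = (\<Sum>K\<in>holes B. card (HPK B K))"
proof -
  have fin: "\<forall>K\<in>holes B. finite (HPK B K)"
    using finite_all_pairs[OF fB] unfolding HPK_def
    by (auto intro: finite_subset[of _ "{(c, d). c \<in> B \<and> adj c d}"])
  have disj: "\<forall>K1\<in>holes B. \<forall>K2\<in>holes B. K1 \<noteq> K2 \<longrightarrow> HPK B K1 \<inter> HPK B K2 = {}"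
  proof (intro ballI impI)
    fix K1 K2 assume K: "K1 \<in> holes B" "K2 \<in> holes B" "K1 \<noteq> K2"
    show "HPK B K1 \<inter> HPK B K2 = {}"
    proof (rule ccontr)
      assume "HPK B K1 \<inter> HPK B K2 \<noteq> {}"
      then obtain d where "d \<in> K1" "d \<in> K2" unfolding HPK_def by auto
      then show False using comp_disj K unfolding holes_def by blast
    qed
  qed
  show ?thesis unfolding HP_UN by (rule card_UN_disjoint[OF fH fin disj])
qed

lemma HPK_unit:
  assumes K: "K \<in> holes B" and c1: "card K = 1"
  shows "card (HPK B K) = 4"
proof -
  obtain d where d: "K = {d}" using c1 card_1_singletonE by blast
  have Kc: "K \<in> components (- B)" using K unfolding holes_def by simp
  have nb: "c \<in> B" if "adj c d" for c
  proof (rule ccontr)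
    assume "c \<notin> B"
    then have "c \<in> K" using comp_closed[OF Kc _ _ adj_sym[OF that]] d by auto
    then show False using d that adj_irrefl by auto
  qed
  have "HPK B K = (\<lambda>c. (c, d)) ` nbrs d"
    unfolding HPK_def d using nb adj_iff_nbrs adj_sym by blast
  moreover have "inj_on (\<lambda>c. (c, d)) (nbrs d)" by (auto simp: inj_on_def)
  ultimately show ?thesis by (simp add: card_image card_nbrs)
qed

lemma HPK_ge4:
  assumes K: "K \<in> holes B"
  shows "4 \<le> card (HPK B K)"
proof -
  have Kc: "K \<in> components (- B)" and fK: "finite K" using K unfolding holes_def by auto
  have ne: "K \<noteq> {}" using comp_ne Kc by blast
  have inB: "(fst d + dx, snd d + dy) \<in> B"
    if "d \<in> K" "\<bar>dx\<bar> + \<bar>dy\<bar> = 1" "(fst d + dx, snd d + dy) \<notin> K" for d dx dy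
  proof (rule ccontr)
    assume "(fst d + dx, snd d + dy) \<notin> B"
    moreover have "adj d (fst d + dx, snd d + dy)" unfolding adj_def using that(2) by simp
    ultimately show False using comp_closed[OF Kc that(1)] that(3) by auto
  qed
  have "Min (fst ` K) \<in> fst ` K" using fK ne by simp
  then obtain d1 where d1: "d1 \<in> K" "fst d1 = Min (fst ` K)" by auto
  have "(fst d1 + -1, snd d1 + 0) \<notin> K"
  proof
    assume "(fst d1 + -1, snd d1 + 0) \<in> K"
    then have "Min (fst ` K) \<le> fst d1 - 1" using fK by (metis Min_le add.commute finite_imageI fst_conv image_eqI uminus_add_conv_diff)
    then show False using d1 by simp
  qed
  then have p1: "((fst d1 - 1, snd d1), d1) \<in> HPK B K"
    using inB[OF d1(1), of "-1" 0] d1 unfolding HPK_def adj_def by simp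
  have "Max (fst ` K) \<in> fst ` K" using fK ne by simp
  then obtain d2 where d2: "d2 \<in> K" "fst d2 = Max (fst ` K)" by auto
  have "(fst d2 + 1, snd d2 + 0) \<notin> K"
  proof
    assume "(fst d2 + 1, snd d2 + 0) \<in> K"
    then have "fst d2 + 1 \<le> Max (fst ` K)" using fK by (metis Max_ge finite_imageI fst_conv image_eqI add_0_right)
    then show False using d2 by simp
  qed
  then have p2: "((fst d2 + 1, snd d2), d2) \<in> HPK B K"
    using inB[OF d2(1), of 1 0] d2 unfolding HPK_def adj_def by simp
  have "Min (snd ` K) \<in> snd ` K" using fK ne by simp
  then obtain d3 where d3: "d3 \<in> K" "snd d3 = Min (snd ` K)" by auto
  have "(fst d3 + 0, snd d3 + -1) \<notin> K"
  proof
    assume "(fst d3 + 0, snd d3 + -1) \<in> K"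
    then have "Min (snd ` K) \<le> snd d3 - 1" using fK by (metis Min_le add.commute finite_imageI snd_conv image_eqI uminus_add_conv_diff)
    then show False using d3 by simp
  qed
  then have p3: "((fst d3, snd d3 - 1), d3) \<in> HPK B K"
    using inB[OF d3(1), of 0 "-1"] d3 unfolding HPK_def adj_def by simp
  have "Max (snd ` K) \<in> snd ` K" using fK ne by simp
  then obtain d4 where d4: "d4 \<in> K" "snd d4 = Max (snd ` K)" by auto
  have "(fst d4 + 0, snd d4 + 1) \<notin> K"
  proof
    assume "(fst d4 + 0, snd d4 + 1) \<in> K"
    then have "snd d4 + 1 \<le> Max (snd ` K)" using fK by (metis Max_ge finite_imageI snd_conv image_eqI add_0_right)
    then show False using d4 by simp
  qed
  then have p4: "((fst d4, snd d4 + 1), d4) \<in> HPK B K"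
    using inB[OF d4(1), of 0 1] d4 unfolding HPK_def adj_def by simp
  have sub: "{((fst d1 - 1, snd d1), d1), ((fst d2 + 1, snd d2), d2), ((fst d3, snd d3 - 1), d3),
              ((fst d4, snd d4 + 1), d4)} \<subseteq> HPK B K" using p1 p2 p3 p4 by blast
  have c4: "card {((fst d1 - 1, snd d1), d1), ((fst d2 + 1, snd d2), d2), ((fst d3, snd d3 - 1), d3),
              ((fst d4, snd d4 + 1), d4)} = 4"
    by (auto simp: prod_eq_iff)
  have fin: "finite (HPK B K)"
  proof -
    have "HPK B K \<subseteq> Sigma UNIV nbrs \<inter> {p. snd p \<in> K}"
      unfolding HPK_def using adj_iff_nbrs by auto
    moreover have "HPK B K \<subseteq> (\<lambda>(d, c). (c, d)) ` (Sigma K nbrs)"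
      unfolding HPK_def using adj_iff_nbrs adj_sym by (auto simp: image_iff)
    moreover have "finite (Sigma K nbrs)" using fK finite_nbrs by simp
    ultimately show ?thesis using finite_subset by blast
  qed
  show ?thesis using card_mono[OF fin sub] c4 by simp
qed



lemma outer_pt:
  assumes c: "c \<in> B" and dir: "\<bar>dx\<bar> + \<bar>dy\<bar> = 1"
    and out: "\<forall>j::nat. (fst c + (int j + 1) * dx, snd c + (int j + 1) * dy) \<notin> B"
  shows "(c, (fst c + dx, snd c + dy)) \<in> OP B"
proof -
  define d where "d = (fst c + dx, snd c + dy)"
  have dB: "d \<notin> B" using out[rule_format, of 0] d_def by simp
  have ad: "adj c d" unfolding adj_def d_def using dir by simp
  have "d \<notin> \<Union>(holes B)"
  proof
    assume "d \<in> \<Union>(holes B)"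
    then obtain K where K: "K \<in> holes B" "d \<in> K" by blast
    have Kc: "K \<in> components (- B)" and fK: "finite K" using K unfolding holes_def by auto
    have "\<forall>j::nat. (fst d + int j * dx, snd d + int j * dy) \<in> - B"
    proof
      fix j :: nat
      have "(fst d + int j * dx, snd d + int j * dy) = (fst c + (int j + 1) * dx, snd c + (int j + 1) * dy)"
        unfolding d_def by (simp add: algebra_simps)
      then show "(fst d + int j * dx, snd d + int j * dy) \<in> - B" using out by simp
    qed
    then have "infinite K" using ray[OF Kc K(2) dir] by blast
    then show False using fK by simp
  qed
  then show ?thesis unfolding OP_def using c dB ad d_def by simp
qed

lemma col_row:
  assumes K: "K \<in> holes B" and d: "d \<in> K"
  shows "fst d \<in> fst ` B" "snd d \<in> snd ` B"
proof -
  have Kc: "K \<in> components (- B)" and fK: "finite K" using K unfolding holes_def by auto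
  show "fst d \<in> fst ` B"
  proof (rule ccontr)
    assume n: "fst d \<notin> fst ` B"
    have "\<forall>j::nat. (fst d + int j * 0, snd d + int j * 1) \<in> - B"
      using n by (auto simp: image_iff)
    then have "infinite K" using ray[OF Kc d, of 0 1] by simp
    then show False using fK by simp
  qed
  show "snd d \<in> snd ` B"
  proof (rule ccontr)
    assume n: "snd d \<notin> snd ` B"
    have "\<forall>j::nat. (fst d + int j * 1, snd d + int j * 0) \<in> - B"
      using n by (auto simp: image_iff)
    then have "infinite K" using ray[OF Kc d, of 1 0] by simp
    then show False using fK by simp
  qed
qed

lemma OP_ge:
  assumes fB: "finite B"
  shows "2 * card (fst ` B) + 2 * card (snd ` B) \<le> card (OP B)"
proof -
  define X where "X = fst ` B"
  define Y where "Y = snd ` B"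
  define yt where "yt x = Max {y. (x, y) \<in> B}" for x
  define yb where "yb x = Min {y. (x, y) \<in> B}" for x
  define xr where "xr y = Max {x. (x, y) \<in> B}" for y
  define xl where "xl y = Min {x. (x, y) \<in> B}" for y
  have fc: "finite {y. (x, y) \<in> B}" for x
    by (rule finite_subset[of _ "snd ` B"]) (use fB in \<open>auto simp: image_iff\<close>, metis snd_conv)
  have fr: "finite {x. (x, y) \<in> B}" for y
    by (rule finite_subset[of _ "fst ` B"]) (use fB in \<open>auto simp: image_iff\<close>, metis fst_conv)
  have nec: "{y. (x, y) \<in> B} \<noteq> {}" if "x \<in> X" for x using that X_def by force
  have ner: "{x. (x, y) \<in> B} \<noteq> {}" if "y \<in> Y" for y using that Y_def by force
  define top where "top x = ((x, yt x), (x, yt x + 1))" for x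
  define bot where "bot x = ((x, yb x), (x, yb x - 1))" for x
  define rgt where "rgt y = ((xr y, y), (xr y + 1, y))" for y
  define lft where "lft y = ((xl y, y), (xl y - 1, y))" for y
  have t: "top x \<in> OP B" if "x \<in> X" for x
  proof -
    have i: "(x, yt x) \<in> B" using Max_in[OF fc nec[OF that]] yt_def by simp
    have "\<forall>j::nat. (fst (x, yt x) + (int j + 1) * 0, snd (x, yt x) + (int j + 1) * 1) \<notin> B"
    proof
      fix j :: nat
      show "(fst (x, yt x) + (int j + 1) * 0, snd (x, yt x) + (int j + 1) * 1) \<notin> B"
      proof
        assume "(fst (x, yt x) + (int j + 1) * 0, snd (x, yt x) + (int j + 1) * 1) \<in> B"
        then have "yt x + (int j + 1) \<le> yt x" unfolding yt_def using Max_ge[OF fc, of "yt x + (int j + 1)" x] yt_def by simp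
        then show False by simp
      qed
    qed
    from outer_pt[OF i _ this] show ?thesis unfolding top_def by simp
  qed
  have b: "bot x \<in> OP B" if "x \<in> X" for x
  proof -
    have i: "(x, yb x) \<in> B" using Min_in[OF fc nec[OF that]] yb_def by simp
    have "\<forall>j::nat. (fst (x, yb x) + (int j + 1) * 0, snd (x, yb x) + (int j + 1) * -1) \<notin> B"
    proof
      fix j :: nat
      show "(fst (x, yb x) + (int j + 1) * 0, snd (x, yb x) + (int j + 1) * -1) \<notin> B"
      proof
        assume "(fst (x, yb x) + (int j + 1) * 0, snd (x, yb x) + (int j + 1) * -1) \<in> B"
        then have "yb x \<le> yb x - (int j + 1)" unfolding yb_def using Min_le[OF fc, of "yb x - (int j + 1)" x] yb_def by (simp add: algebra_simps)
        then show False by simp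
      qed
    qed
    from outer_pt[OF i _ this] show ?thesis unfolding bot_def by simp
  qed
  have r: "rgt y \<in> OP B" if "y \<in> Y" for y
  proof -
    have i: "(xr y, y) \<in> B" using Max_in[OF fr ner[OF that]] xr_def by simp
    have "\<forall>j::nat. (fst (xr y, y) + (int j + 1) * 1, snd (xr y, y) + (int j + 1) * 0) \<notin> B"
    proof
      fix j :: nat
      show "(fst (xr y, y) + (int j + 1) * 1, snd (xr y, y) + (int j + 1) * 0) \<notin> B"
      proof
        assume "(fst (xr y, y) + (int j + 1) * 1, snd (xr y, y) + (int j + 1) * 0) \<in> B"
        then have "xr y + (int j + 1) \<le> xr y" unfolding xr_def using Max_ge[OF fr, of "xr y + (int j + 1)" y] xr_def by (simp add: algebra_simps)
        then show False by simp
      qed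
    qed
    from outer_pt[OF i _ this] show ?thesis unfolding rgt_def by simp
  qed
  have l: "lft y \<in> OP B" if "y \<in> Y" for y
  proof -
    have i: "(xl y, y) \<in> B" using Min_in[OF fr ner[OF that]] xl_def by simp
    have "\<forall>j::nat. (fst (xl y, y) + (int j + 1) * -1, snd (xl y, y) + (int j + 1) * 0) \<notin> B"
    proof
      fix j :: nat
      show "(fst (xl y, y) + (int j + 1) * -1, snd (xl y, y) + (int j + 1) * 0) \<notin> B"
      proof
        assume "(fst (xl y, y) + (int j + 1) * -1, snd (xl y, y) + (int j + 1) * 0) \<in> B"
        then have "xl y \<le> xl y - (int j + 1)" unfolding xl_def using Min_le[OF fr, of "xl y - (int j + 1)" y] xl_def by (simp add: algebra_simps)
        then show False by simp
      qed
    qed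
    from outer_pt[OF i _ this] show ?thesis unfolding lft_def by simp
  qed
  have fX: "finite X" "finite Y" using fB X_def Y_def by auto
  have it: "card (top ` X) = card X" by (rule card_image) (auto simp: inj_on_def top_def)
  have ib: "card (bot ` X) = card X" by (rule card_image) (auto simp: inj_on_def bot_def)
  have ir: "card (rgt ` Y) = card Y" by (rule card_image) (auto simp: inj_on_def rgt_def)
  have il: "card (lft ` Y) = card Y" by (rule card_image) (auto simp: inj_on_def lft_def)
  have d1: "top ` X \<inter> bot ` X = {}" by (auto simp: top_def bot_def)
  have d2: "(top ` X \<union> bot ` X) \<inter> rgt ` Y = {}" by (auto simp: top_def bot_def rgt_def)
  have d3: "(top ` X \<union> bot ` X \<union> rgt ` Y) \<inter> lft ` Y = {}" by (auto simp: top_def bot_def rgt_def lft_def)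
  have cU: "card (top ` X \<union> bot ` X \<union> rgt ` Y \<union> lft ` Y) = 2 * card X + 2 * card Y"
    using fX it ib ir il d1 d2 d3 by (simp add: card_Un_disjoint)
  have sub: "top ` X \<union> bot ` X \<union> rgt ` Y \<union> lft ` Y \<subseteq> OP B" using t b r l by blast
  have fOP: "finite (OP B)"
    by (rule finite_subset[OF _ finite_bnd[OF fB]]) (auto simp: OP_def bnd_def)
  show ?thesis using card_mono[OF fOP sub] cU X_def Y_def by simp
qed

lemma box_bound:
  assumes fB: "finite B" and fH: "finite (holes B)"
  shows "card B + card (holes B) \<le> card (fst ` B) * card (snd ` B)"
    and "card B + card (holes B) \<ge> card (fst ` B) * card (snd ` B) \<Longrightarrow>
         B \<union> \<Union>(holes B) = fst ` B \<times> snd ` B"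
proof -
  define F where "F = B \<union> \<Union>(holes B)"
  have sub: "F \<subseteq> fst ` B \<times> snd ` B"
    unfolding F_def using col_row by (auto simp: image_iff) (metis fst_conv snd_conv)+
  have fK: "\<forall>K\<in>holes B. finite K" unfolding holes_def by simp
  have dj: "\<forall>K1\<in>holes B. \<forall>K2\<in>holes B. K1 \<noteq> K2 \<longrightarrow> K1 \<inter> K2 = {}"
    using comp_disj unfolding holes_def by blast
  have cU: "card (\<Union>(holes B)) = (\<Sum>K\<in>holes B. card K)"
    using card_UN_disjoint[OF fH fK dj] by simp
  have "(\<Sum>K\<in>holes B. (1::nat)) \<le> (\<Sum>K\<in>holes B. card K)"
  proof (rule sum_mono)
    fix K assume "K \<in> holes B"
    then show "1 \<le> card K" using comp_ne fK unfolding holes_def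
      by (metis (no_types, lifting) One_nat_def Suc_leI card_gt_0_iff mem_Collect_eq)
  qed
  then have hU: "card (holes B) \<le> card (\<Union>(holes B))" using cU by simp
  have fU: "finite (\<Union>(holes B))" using fH fK by blast
  have dBU: "B \<inter> \<Union>(holes B) = {}" using holes_sub by blast
  have cF: "card F = card B + card (\<Union>(holes B))"
    unfolding F_def using fB fU dBU by (simp add: card_Un_disjoint)
  have fbox: "finite (fst ` B \<times> snd ` B)" using fB by simp
  have cbox: "card (fst ` B \<times> snd ` B) = card (fst ` B) * card (snd ` B)" by (simp add: card_cartesian_product)
  have le: "card F \<le> card (fst ` B) * card (snd ` B)" using card_mono[OF fbox sub] cbox by simp
  then show "card B + card (holes B) \<le> card (fst ` B) * card (snd ` B)" using cF hU by simp
  assume "card B + card (holes B) \<ge> card (fst ` B) * card (snd ` B)"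
  then have "card F = card (fst ` B \<times> snd ` B)" using le cF hU cbox by simp
  then show "B \<union> \<Union>(holes B) = fst ` B \<times> snd ` B" using card_subset_eq[OF fbox sub] F_def by simp
qed

lemma interval_lemma:
  assumes f: "\<forall>c d. adj c d \<longrightarrow> \<bar>f c - f d\<bar> \<le> (1::int)"
    and p: "(c, d) \<in> (adj_rel B)\<^sup>*" and cB: "c \<in> B" and x: "f c \<le> x" "x \<le> f d"
  shows "x \<in> f ` B"
  using p x
proof (induction arbitrary: x rule: rtrancl_induct)
  case base
  then show ?case using cB by force
next
  case (step b e)
  show ?case
  proof (cases "x \<le> f b")
    case True
    then show ?thesis using step by blast
  next
    case False
    have "\<bar>f b - f e\<bar> \<le> 1" "e \<in> B" using f[rule_format, of b e] step(2) unfolding adj_rel_def by auto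
    then have "x = f e" using False step.prems by linarith
    then show ?thesis using \<open>e \<in> B\<close> by blast
  qed
qed

lemma interval:
  assumes p: "polyomino B" and f: "\<forall>c d. adj c d \<longrightarrow> \<bar>f c - f d\<bar> \<le> (1::int)"
  shows "f ` B = {Min (f ` B)..Max (f ` B)}"
proof -
  have fB: "finite B" "B \<noteq> {}" using p unfolding polyomino_def by auto
  have "Min (f ` B) \<in> f ` B" "Max (f ` B) \<in> f ` B" using fB by simp_all
  then obtain c d where c: "c \<in> B" "f c = Min (f ` B)" and d: "d \<in> B" "f d = Max (f ` B)" by force
  have cd: "(c, d) \<in> (adj_rel B)\<^sup>*" using p c d unfolding polyomino_def by blast
  show ?thesis
  proof
    show "f ` B \<subseteq> {Min (f ` B)..Max (f ` B)}" using fB by auto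
    show "{Min (f ` B)..Max (f ` B)} \<subseteq> f ` B"
    proof
      fix x assume "x \<in> {Min (f ` B)..Max (f ` B)}"
      then show "x \<in> f ` B" using interval_lemma[OF f cd c(1)] c d by auto
    qed
  qed
qed

lemma adj_fst: "\<forall>c d. adj c d \<longrightarrow> \<bar>fst c - fst d\<bar> \<le> (1::int)"
  unfolding adj_def by auto
lemma adj_snd: "\<forall>c d. adj c d \<longrightarrow> \<bar>snd c - snd d\<bar> \<le> (1::int)"
  unfolding adj_def by auto



lemma ceil_sq:
  assumes m: "m \<ge> (1::nat)"
  shows "(\<lceil>2 * sqrt (real m)\<rceil> - 1)^2 < 4 * int m"
proof -
  define x where "x = 2 * sqrt (real m)"
  define k where "k = \<lceil>x\<rceil>"
  have x2: "x \<ge> 2" unfolding x_def using m by simp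
  have a: "real_of_int k - 1 < x" "x \<le> real_of_int k" unfolding k_def using ceiling_correct by auto
  have "0 \<le> real_of_int k - 1" using a x2 by simp
  then have "(real_of_int k - 1) * (real_of_int k - 1) < x * x"
    using a by (intro mult_strict_mono) auto
  also have "x * x = 4 * real m" unfolding x_def by simp
  finally have "real_of_int ((k - 1)^2) < real_of_int (4 * int m)" by (simp add: power2_eq_square)
  then show ?thesis unfolding k_def x_def by linarith
qed

lemma ring_nbrs:
  fixes x0 x1 y0 y1 a b :: int
  defines "Rg \<equiv> {c. x0 \<le> fst c \<and> fst c \<le> x1 \<and> y0 \<le> snd c \<and> snd c \<le> y1 \<and>
                   (fst c = x0 \<or> fst c = x1 \<or> snd c = y0 \<or> snd c = y1)}"
  assumes "x0 < x1" "y0 < y1" "(a, b) \<in> Rg"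
  shows "\<exists>u1 u2. u1 \<in> Rg \<and> u2 \<in> Rg \<and> u1 \<noteq> u2 \<and> adj (a, b) u1 \<and> adj (a, b) u2"
proof -
  have ab: "x0 \<le> a" "a \<le> x1" "y0 \<le> b" "b \<le> y1" "a = x0 \<or> a = x1 \<or> b = y0 \<or> b = y1"
    using assms(4) unfolding Rg_def by auto
  show ?thesis
  proof (cases "b = y0 \<or> b = y1")
    case hb: True
    define v where "v = (a, if b = y0 then b + 1 else b - 1)"
    have vR: "v \<in> Rg" "adj (a, b) v" if "a = x0 \<or> a = x1"
      unfolding v_def Rg_def adj_def using ab assms(2,3) hb that by auto
    show ?thesis
    proof (cases "x0 < a \<and> a < x1")
      case True
      then show ?thesis using ab hb
        by (intro exI[of _ "(a - 1, b)"] exI[of _ "(a + 1, b)"]) (auto simp: Rg_def adj_def)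
    next
      case False
      then have "a = x0 \<or> a = x1" using ab by auto
      then show ?thesis
      proof
        assume "a = x0"
        then show ?thesis using ab hb vR assms(2,3)
          by (intro exI[of _ "(a + 1, b)"] exI[of _ v]) (auto simp: Rg_def adj_def v_def)
      next
        assume "a = x1"
        then show ?thesis using ab hb vR assms(2,3)
          by (intro exI[of _ "(a - 1, b)"] exI[of _ v]) (auto simp: Rg_def adj_def v_def)
      qed
    qed
  next
    case False
    then have "a = x0 \<or> a = x1" "y0 < b" "b < y1" using ab by auto
    then show ?thesis using ab
      by (intro exI[of _ "(a, b - 1)"] exI[of _ "(a, b + 1)"]) (auto simp: Rg_def adj_def)
  qed
qed

lemma ring_count:
  assumes p: "polyomino B" and hne: "holes B \<noteq> {}"
    and full: "B \<union> \<Union>(holes B) = fst ` B \<times> snd ` B"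
  shows "2 * card B \<le> card (adj_rel B)"
proof -
  have fB: "finite B" "B \<noteq> {}" using p unfolding polyomino_def by auto
  define x0 where "x0 = Min (fst ` B)"
  define x1 where "x1 = Max (fst ` B)"
  define y0 where "y0 = Min (snd ` B)"
  define y1 where "y1 = Max (snd ` B)"
  have X: "fst ` B = {x0..x1}" unfolding x0_def x1_def by (rule interval[OF p adj_fst])
  have Y: "snd ` B = {y0..y1}" unfolding y0_def y1_def by (rule interval[OF p adj_snd])
  have inF: "c \<in> B \<union> \<Union>(holes B) \<longleftrightarrow> x0 \<le> fst c \<and> fst c \<le> x1 \<and> y0 \<le> snd c \<and> snd c \<le> y1" for c
    using full X Y by (cases c) auto
  have nbF: "e \<in> B \<union> \<Union>(holes B)" if "K \<in> holes B" "d \<in> K" "adj d e" for K d e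
  proof (cases "e \<in> B")
    case False
    have "K \<in> components (- B)" using that(1) unfolding holes_def by simp
    then have "e \<in> K" using comp_closed that False by blast
    then show ?thesis using that(1) by blast
  qed simp
  obtain K d where Kd: "K \<in> holes B" "d \<in> K" using hne comp_ne unfolding holes_def by blast
  have "(fst d + 1, snd d) \<in> B \<union> \<Union>(holes B)" "(fst d - 1, snd d) \<in> B \<union> \<Union>(holes B)"
       "(fst d, snd d + 1) \<in> B \<union> \<Union>(holes B)" "(fst d, snd d - 1) \<in> B \<union> \<Union>(holes B)"
    by (rule nbF[OF Kd]; simp add: adj_def)+
  then have lt: "x0 < x1" "y0 < y1" unfolding inF by auto
  define Rg where "Rg = {c. x0 \<le> fst c \<and> fst c \<le> x1 \<and> y0 \<le> snd c \<and> snd c \<le> y1 \<and>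
                   (fst c = x0 \<or> fst c = x1 \<or> snd c = y0 \<or> snd c = y1)}"
  have RgB: "Rg \<subseteq> B"
  proof
    fix c assume c: "c \<in> Rg"
    show "c \<in> B"
    proof (rule ccontr)
      assume "c \<notin> B"
      moreover have "c \<in> B \<union> \<Union>(holes B)" using c unfolding inF Rg_def by auto
      ultimately obtain K' where K': "K' \<in> holes B" "c \<in> K'" by blast
      have "(fst c + 1, snd c) \<in> B \<union> \<Union>(holes B)" "(fst c - 1, snd c) \<in> B \<union> \<Union>(holes B)"
           "(fst c, snd c + 1) \<in> B \<union> \<Union>(holes B)" "(fst c, snd c - 1) \<in> B \<union> \<Union>(holes B)"
        by (rule nbF[OF K']; simp add: adj_def)+
      then show False using c unfolding inF Rg_def by auto
    qed
  qed
  have "(x0, y0) \<in> Rg" unfolding Rg_def using lt by simp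
  then have Rne: "Rg \<noteq> {}" by blast
  have two: "\<forall>y\<in>Rg. \<exists>u1 u2. u1 \<in> Rg \<and> u2 \<in> Rg \<and> u1 \<noteq> u2 \<and> adj y u1 \<and> adj y u2"
  proof
    fix y assume "y \<in> Rg"
    then show "\<exists>u1 u2. u1 \<in> Rg \<and> u2 \<in> Rg \<and> u1 \<noteq> u2 \<and> adj y u1 \<and> adj y u2"
      using ring_nbrs[OF lt, of "fst y" "snd y"] unfolding Rg_def by simp
  qed
  obtain r where r: "r \<in> B" using fB by blast
  have conn: "\<forall>v\<in>B. (r, v) \<in> (adj_rel B)\<^sup>*" using p r unfolding polyomino_def by blast
  show ?thesis using tree_count(2)[OF fB(1) r conn RgB Rne two] .
qed



lemma lin_aux:
  fixes ss P Q kk s k n h n' :: int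
  assumes "ss = Q + 2*P" "0 \<le> Q - 2*P" "ss - 4*s + 4 \<le> kk - 6*k + 9" "kk - 2*k + 1 < 4*n + 4*h"
    "2*n \<le> 2*k + 4*h - 2" "2*s + 4*h - 2 \<le> 2*n'"
  shows "4*P < 4*(n' + h) + 4"
  using assms by arith

lemma lin_aux2:
  fixes ss P Q kk s k n h n' :: int
  assumes "ss = Q + 2*P" "0 \<le> Q - 2*P" "ss - 4*s + 4 \<le> kk - 6*k + 9" "kk - 2*k + 1 < 4*n + 4*h"
    "2*n \<le> 2*k + 4*h - 2" "2*s + 4*h \<le> 2*n'" "n' + h \<le> P"
  shows False
  using assms by arith

lemma arith_core:
  fixes n h k n' W T :: int
  assumes a1: "2*n \<le> 2*k + 4*h - 2" and a2: "(k-1)^2 < 4*(n+h)"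
    and b1: "2*n' \<ge> 2*(W+T) + 4*h - 2" and b2: "n' + h \<le> W*T"
    and c: "n' \<le> n - 1" and w: "W \<ge> 1" "T \<ge> 1"
  shows "W*T \<le> n' + h" and "2*n' \<ge> 2*(W+T) + 4*h \<Longrightarrow> False"
proof -
  define s where "s = W + T"
  have s2a: "2 \<le> s" using w s_def by linarith
  have "2 * s + 4 * h - 2 \<le> 2 * k + 4 * h - 4" using b1 a1 c unfolding s_def by linarith
  then have s2b: "s \<le> k - 1" by linarith
  note s2 = s2a s2b
  have f3: "(s-2)*(s-2) \<le> (k-3)*(k-3)" using s2 by (intro mult_mono) auto
  then have f3': "s*s - 4*s + 4 \<le> k*k - 6*k + 9" by (simp add: algebra_simps)
  have f4: "k*k - 2*k + 1 < 4*n + 4*h" using a2 by (simp add: power2_eq_square algebra_simps)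
  have f1: "s*s = (W*W + T*T) + 2*(W*T)" unfolding s_def by (simp add: algebra_simps)
  have "0 \<le> (W-T)*(W-T)" by simp
  then have f2: "0 \<le> (W*W + T*T) - 2*(W*T)" by (simp add: algebra_simps)
  have b1s: "2*s + 4*h - 2 \<le> 2*n'" using b1 s_def by simp
  have "4*(W*T) < 4*(n' + h) + 4"
    using lin_aux[OF f1 f2 f3' f4 a1 b1s] by simp
  then show "W*T \<le> n' + h" by presburger
  assume "2*n' \<ge> 2*(W+T) + 4*h"
  then have "2*s + 4*h \<le> 2*n'" using s_def by simp
  then show False using lin_aux2[OF f1 f2 f3' f4 a1 _ b2] by simp
qed

theorem theorem4:
  fixes A :: "cell set"
  assumes "efficiently_structured A"
    and "num_holes A \<ge> 1"
  shows "crystallized A"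
proof -
  have pA: "polyomino A" and acA: "acyclic_poly A" and unit: "\<forall>K\<in>holes A. card K = 1"
    and mop: "min_outer_perimeter A"
    using assms(1) unfolding efficiently_structured_def by auto
  define h where "h = num_holes A"
  define n where "n = card A"
  have h1: "h \<ge> 1" using assms(2) h_def by simp
  have fHA: "finite (holes A)" using h1 h_def unfolding num_holes_def by (metis card.infinite not_one_le_zero)
  have fA: "finite A" using pA unfolding polyomino_def by simp
  have cA: "4 * n = card (adj_rel A) + card (OP A) + card (HP A)" using count_split[OF fA] n_def by simp
  have "card (HP A) = (\<Sum>K\<in>holes A. card (HPK A K))" by (rule card_HP[OF fA fHA])
  also have "\<dots> = (\<Sum>K\<in>holes A. 4)" using HPK_unit unit by simp
  finally have hpA: "card (HP A) = 4 * h" unfolding h_def num_holes_def by simp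
  have adA: "card (adj_rel A) + 2 \<le> 2 * n" using acyclic_edges[OF acA] n_def by simp
  define k where "k = \<lceil>2 * sqrt (real (n + h))\<rceil>"
  have opA: "int (card (OP A)) = 2 * k"
    using mop unfolding min_outer_perimeter_def outer_OP k_def n_def h_def by simp
  have ksq: "(k - 1)^2 < 4 * int (n + h)" unfolding k_def by (rule ceil_sq) (use h1 in simp)
  have Anb: "2 * int n \<le> 2 * k + 4 * int h - 2" using cA hpA adA opA by linarith
  have lower: "n \<le> card B" if pB: "polyomino B" and hB: "num_holes B = h" for B
  proof (rule ccontr)
    assume "\<not> n \<le> card B"
    then have lt: "card B \<le> n - 1" by simp
    have fB: "finite B" "B \<noteq> {}" using pB unfolding polyomino_def by auto
    have fHB: "finite (holes B)" using h1 hB unfolding num_holes_def by (metis card.infinite not_one_le_zero)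
    have hne: "holes B \<noteq> {}" using h1 hB unfolding num_holes_def by auto
    have cB: "4 * card B = card (adj_rel B) + card (OP B) + card (HP B)" using count_split[OF fB(1)] by simp
    have "(\<Sum>K\<in>holes B. (4::nat)) \<le> (\<Sum>K\<in>holes B. card (HPK B K))"
      by (rule sum_mono) (rule HPK_ge4)
    then have hpB: "4 * h \<le> card (HP B)" using card_HP[OF fB(1) fHB] hB unfolding num_holes_def by simp
    obtain r where r: "r \<in> B" using fB by blast
    have conn: "\<forall>v\<in>B. (r, v) \<in> (adj_rel B)\<^sup>*" using pB r unfolding polyomino_def by blast
    have adB: "2 * card B \<le> card (adj_rel B) + 2" using tree_count(1)[OF fB(1) r conn] .
    have opB: "2 * card (fst ` B) + 2 * card (snd ` B) \<le> card (OP B)" using OP_ge[OF fB(1)] .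
    have bx: "card B + h \<le> card (fst ` B) * card (snd ` B)"
      using box_bound(1)[OF fB(1) fHB] hB unfolding num_holes_def by simp
    have W1: "card (fst ` B) \<ge> 1" "card (snd ` B) \<ge> 1" using fB
      by (simp_all add: Suc_le_eq card_gt_0_iff)
    define W where "W = int (card (fst ` B))"
    define T where "T = int (card (snd ` B))"
    have nb: "2 * card (fst ` B) + 2 * card (snd ` B) + 4 * h \<le> 2 * card B + 2"
      using cB hpB adB opB by linarith
    then have "int (2 * card (fst ` B) + 2 * card (snd ` B) + 4 * h) \<le> int (2 * card B + 2)"
      by (simp only: of_nat_le_iff)
    then have b1: "2 * int (card B) \<ge> 2 * (W + T) + 4 * int h - 2"
      unfolding W_def T_def by simp
    have b2: "int (card B) + int h \<le> W * T" using bx W_def T_def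
      by (metis of_nat_add of_nat_le_iff of_nat_mult)
    have c: "int (card B) \<le> int n - 1" using lt \<open>\<not> n \<le> card B\<close> by linarith
    have w: "W \<ge> 1" "T \<ge> 1" using W1 W_def T_def by auto
    have a2: "(k - 1)^2 < 4 * (int n + int h)" using ksq by simp
    have "W * T \<le> int (card B) + int h" using arith_core(1)[OF Anb a2 b1 b2 c w] .
    then have "card (fst ` B) * card (snd ` B) \<le> card B + h" using W_def T_def
      by (metis of_nat_add of_nat_le_iff of_nat_mult)
    then have full: "B \<union> \<Union>(holes B) = fst ` B \<times> snd ` B"
      using box_bound(2)[OF fB(1) fHB] hB unfolding num_holes_def by simp
    have "2 * card B \<le> card (adj_rel B)" using ring_count[OF pB hne full] .
    then have "2 * card (fst ` B) + 2 * card (snd ` B) + 4 * h \<le> 2 * card B"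
      using cB hpB opB by linarith
    then have "int (2 * card (fst ` B) + 2 * card (snd ` B) + 4 * h) \<le> int (2 * card B)"
      by (simp only: of_nat_le_iff)
    then have "2 * int (card B) \<ge> 2 * (W + T) + 4 * int h"
      unfolding W_def T_def by simp
    then show False using arith_core(2)[OF Anb a2 b1 b2 c w] by blast
  qed
  have "g h = n" unfolding g_def
  proof (rule Least_equality)
    show "\<exists>B. polyomino B \<and> num_holes B = h \<and> card B = n" using pA h_def n_def by blast
  next
    fix m assume "\<exists>B. polyomino B \<and> num_holes B = h \<and> card B = m"
    then show "n \<le> m" using lower by blast
  qed
  then show ?thesis unfolding crystallized_def using pA assms(2) h_def n_def by simp
qed

end
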